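(* Let $\hat B$ be the bus susceptance matrix of a connected power network with bus set $\mathcal N$, let $\mathcal T \subseteq \mathcal N$ with $|\mathcal T| \ge 2$, and fix $t \in \mathcal T$. Let $\theta$ be a random vector in $\mathbb R^{\mathcal N}$ with finite second moments and $\theta_t = 0$; let $S$ be a random bus uniformly distributed on $\mathcal T \setminus \{t\}$; and let $\Gamma$ be a real random variable with mean $0$ and variance $\sigma_\Gamma^2$; assume $\theta$, $S$, $\Gamma$ are mutually independent. Let $\hat\theta$ be the random vector with $\hat\theta_t = 0$ and $\hat B\hat\theta = \hat B\theta + \Gamma u^{S,t}$. Then $$\sigma^2_{\hat\theta} \;=\; \sigma^2_{\theta} + \frac{\sigma_\Gamma^2}{|\mathcal T| - 1}\sum_{s \in \mathcal T\setminus\{t\}} v^{s,t}(v^{s,t})^\top,$$ where $\sigma^2_X$ denotes the covariance matrix of a random vector $X$.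
   Context: DC power flow model: each line $km$ has reactance $x_{km} > 0$, and $\hat B_{kk} = \sum_{km \ni k} 1/x_{km}$, $\hat B_{km} = -1/x_{km}$ for a line $km$, $\hat B_{km} = 0$ otherwise. For distinct buses $s,t$, $u^{s,t}_s = 1$, $u^{s,t}_t = -1$, $u^{s,t}_k = 0$ otherwise, and $v^{s,t}$ is the unique vector with $\hat B v^{s,t} = u^{s,t}$ and $v^{s,t}_t = 0$. (In the paper $\theta$ represents phase angles with reference bus $t$ absent the defense, $\hat\theta$ the phase angles after the random injection $\Gamma$ at $S$ and $-\Gamma$ at $t$.) *)

theory Defs
  imports "HOL-Analysis.Analysis" "HOL-Probability.Probability"
begin

text \<open>Buses are the elements of a finite type 'n (the bus set N = UNIV).
  Lines are given by a symmetric irreflexive relation E; line km has reactance x k m.\<close>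

definition susceptance :: "('n::finite \<times> 'n) set \<Rightarrow> ('n \<Rightarrow> 'n \<Rightarrow> real) \<Rightarrow> real^'n^'n" where
  "susceptance E x = (\<chi> k m. if k = m then (\<Sum>j\<in>{j. (k,j) \<in> E}. 1 / x k j)
                              else if (k,m) \<in> E then - 1 / x k m else 0)"

definition valid_network :: "('n::finite \<times> 'n) set \<Rightarrow> ('n \<Rightarrow> 'n \<Rightarrow> real) \<Rightarrow> bool" where
  "valid_network E x \<longleftrightarrow> sym E \<and> irrefl E \<and> (\<forall>k m. x k m = x m k)
     \<and> (\<forall>(k,m)\<in>E. x k m > 0)"

definition connected_network :: "('n \<times> 'n) set \<Rightarrow> bool" where
  "connected_network E \<longleftrightarrow> (\<forall>k m. (k,m) \<in> E\<^sup>*)"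

definition uvec :: "'n::finite \<Rightarrow> 'n \<Rightarrow> real^'n" where
  "uvec s t = (\<chi> k. if k = s then 1 else if k = t then -1 else 0)"

definition vvec :: "real^'n^'n \<Rightarrow> 'n::finite \<Rightarrow> 'n \<Rightarrow> real^'n" where
  "vvec B s t = (THE v. B *v v = uvec s t \<and> v $ t = 0)"

definition outer :: "real^'n \<Rightarrow> real^'n \<Rightarrow> real^'n^'n" where
  "outer a b = (\<chi> i j. a $ i * b $ j)"

definition cov_matrix :: "'a measure \<Rightarrow> ('a \<Rightarrow> real^'n) \<Rightarrow> real^'n^'n" where
  "cov_matrix M X = (\<chi> i j. integral\<^sup>L M (\<lambda>\<omega>.
      (X \<omega> $ i - integral\<^sup>L M (\<lambda>\<eta>. X \<eta> $ i)) * (X \<omega> $ j - integral\<^sup>L M (\<lambda>\<eta>. X \<eta> $ j))))"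

definition indep3 :: "'a measure \<Rightarrow> 'b measure \<Rightarrow> 'c measure \<Rightarrow> 'd measure
    \<Rightarrow> ('a \<Rightarrow> 'b) \<Rightarrow> ('a \<Rightarrow> 'c) \<Rightarrow> ('a \<Rightarrow> 'd) \<Rightarrow> bool" where
  "indep3 M N1 N2 N3 X Y Z \<longleftrightarrow>
     (\<forall>A\<in>sets N1. \<forall>B\<in>sets N2. \<forall>C\<in>sets N3.
        measure M {\<omega>\<in>space M. X \<omega> \<in> A \<and> Y \<omega> \<in> B \<and> Z \<omega> \<in> C}
        = measure M {\<omega>\<in>space M. X \<omega> \<in> A} * measure M {\<omega>\<in>space M. Y \<omega> \<in> B}
          * measure M {\<omega>\<in>space M. Z \<omega> \<in> C})"

end

theory Submission
  imports Defs
begin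

lemma indep_prod:
  fixes \<theta> :: "'a \<Rightarrow> real^'n::finite" and S :: "'a \<Rightarrow> 'n" and \<Gamma> :: "'a \<Rightarrow> real"
    and f :: "real^'n \<Rightarrow> real" and g :: "'n \<Rightarrow> real" and h :: "real \<Rightarrow> real"
  assumes P: "prob_space M"
    and [measurable]: "\<theta> \<in> borel_measurable M" "S \<in> measurable M (count_space UNIV)" "\<Gamma> \<in> borel_measurable M"
    and indep: "indep3 M borel (count_space UNIV) borel \<theta> S \<Gamma>"
    and [measurable]: "f \<in> borel_measurable borel" "h \<in> borel_measurable borel"
    and i1: "integrable M (\<lambda>\<omega>. f (\<theta> \<omega>))" and i2: "integrable M (\<lambda>\<omega>. g (S \<omega>))"
    and i3: "integrable M (\<lambda>\<omega>. h (\<Gamma> \<omega>))"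
  shows "integrable M (\<lambda>\<omega>. f (\<theta> \<omega>) * g (S \<omega>) * h (\<Gamma> \<omega>))
    \<and> integral\<^sup>L M (\<lambda>\<omega>. f (\<theta> \<omega>) * g (S \<omega>) * h (\<Gamma> \<omega>))
       = integral\<^sup>L M (\<lambda>\<omega>. f (\<theta> \<omega>)) * integral\<^sup>L M (\<lambda>\<omega>. g (S \<omega>)) * integral\<^sup>L M (\<lambda>\<omega>. h (\<Gamma> \<omega>))"
proof -
  interpret prob_space M by (rule P)
  define X :: "nat \<Rightarrow> 'a \<Rightarrow> real" where
    "X k = (if k = 0 then (\<lambda>\<omega>. f (\<theta> \<omega>)) else if k = 1 then (\<lambda>\<omega>. g (S \<omega>)) else (\<lambda>\<omega>. h (\<Gamma> \<omega>)))" for k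
  have gm: "(\<lambda>\<omega>. g (S \<omega>)) \<in> borel_measurable M" by measurable
  have rv: "random_variable borel (X k)" for k
    using gm unfolding X_def by auto
  let ?F = "\<lambda>i. {X i -` A \<inter> space M | A. A \<in> sets (borel::real measure)}"
  have ev: "?F i \<subseteq> events" for i using rv by (auto simp: measurable_def)
  have sp: "space M \<in> ?F i" for i by (rule CollectI, rule exI[of _ UNIV]) auto
  have "indep_sets ?F {0,1,2}"
  proof (subst indep_sets_finite)
    show "\<forall>A\<in>Pi {0,1,2} ?F. prob (\<Inter>j\<in>{0,1,2}. A j) = (\<Prod>j\<in>{0,1,2}. prob (A j))"
    proof
      fix A assume A: "A \<in> Pi {0,1,2::nat} ?F"
      obtain A0 where A0: "A0 \<in> sets borel" "A 0 = (\<lambda>\<omega>. f (\<theta> \<omega>)) -` A0 \<inter> space M"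
        using A[THEN Pi_mem, of 0] by (auto simp: X_def)
      obtain A1 where A1: "A1 \<in> sets (borel::real measure)" "A 1 = (\<lambda>\<omega>. g (S \<omega>)) -` A1 \<inter> space M"
        using A[THEN Pi_mem, of 1] by (auto simp: X_def)
      obtain A2 where A2: "A2 \<in> sets borel" "A 2 = (\<lambda>\<omega>. h (\<Gamma> \<omega>)) -` A2 \<inter> space M"
        using A[THEN Pi_mem, of 2] by (auto simp: X_def)
      have B0: "f -` A0 \<in> sets borel"
        using measurable_sets[OF \<open>f \<in> borel_measurable borel\<close> A0(1)] by simp
      have B2: "h -` A2 \<in> sets borel"
        using measurable_sets[OF \<open>h \<in> borel_measurable borel\<close> A2(1)] by simp
      have "prob (\<Inter>j\<in>{0,1,2}. A j) = measure M {\<omega>\<in>space M. \<theta> \<omega> \<in> f -` A0 \<and> S \<omega> \<in> g -` A1 \<and> \<Gamma> \<omega> \<in> h -` A2}"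
        using A0 A1 A2 by (auto intro!: arg_cong[where f="measure M"])
      also have "\<dots> = measure M {\<omega>\<in>space M. \<theta> \<omega> \<in> f -` A0} * measure M {\<omega>\<in>space M. S \<omega> \<in> g -` A1}
          * measure M {\<omega>\<in>space M. \<Gamma> \<omega> \<in> h -` A2}"
        using indep B0 B2 unfolding indep3_def sets_count_space by blast
      also have "\<dots> = (\<Prod>j\<in>{0,1,2}. prob (A j))"
      proof -
        have e0: "A 0 = {\<omega>\<in>space M. \<theta> \<omega> \<in> f -` A0}" using A0 by auto
        have e1: "A 1 = {\<omega>\<in>space M. S \<omega> \<in> g -` A1}" using A1 by auto
        have e2: "A 2 = {\<omega>\<in>space M. \<Gamma> \<omega> \<in> h -` A2}" using A2 by auto
        show ?thesis by (simp add: e0 e1[simplified] e2 mult.assoc)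
      qed
      finally show "prob (\<Inter>j\<in>{0,1,2}. A j) = (\<Prod>j\<in>{0,1,2}. prob (A j))" .
    qed
  qed (use ev sp in auto)
  then have iv: "indep_vars (\<lambda>_. borel) X {0,1,2}"
    unfolding indep_vars_def2 using rv by auto
  have int: "\<And>i. i \<in> {0,1,2} \<Longrightarrow> integrable M (X i)" using i1 i2 i3 by (auto simp: X_def)
  have p: "(\<Prod>i\<in>{0,1,2}. X i \<omega>) = f (\<theta> \<omega>) * g (S \<omega>) * h (\<Gamma> \<omega>)" for \<omega>
    by (simp add: X_def)
  have q: "(\<Prod>i\<in>{0,1,2}. integral\<^sup>L M (X i)) = integral\<^sup>L M (\<lambda>\<omega>. f (\<theta> \<omega>)) * integral\<^sup>L M (\<lambda>\<omega>. g (S \<omega>)) * integral\<^sup>L M (\<lambda>\<omega>. h (\<Gamma> \<omega>))"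
    by (simp add: X_def)
  show ?thesis
    using indep_vars_lebesgue_integral[OF _ iv int] indep_vars_integrable[OF _ iv int]
    unfolding p q by auto
qed

lemma row_formula:
  fixes E :: "('n::finite \<times> 'n) set"
  assumes net: "valid_network E x"
  shows "(susceptance E x *v w) $ k = (\<Sum>j\<in>{j. (k,j) \<in> E}. (w$k - w$j) / x k j)"
proof -
  have irr: "(k,k) \<notin> E" using net unfolding valid_network_def irrefl_def by auto
  have "(susceptance E x *v w) $ k = (\<Sum>m\<in>UNIV. susceptance E x $ k $ m * w $ m)"
    by (simp add: matrix_vector_mult_def)
  also have "\<dots> = susceptance E x $ k $ k * w $ k + (\<Sum>m\<in>UNIV - {k}. susceptance E x $ k $ m * w $ m)"
    by (simp add: sum.remove)
  also have "(\<Sum>m\<in>UNIV - {k}. susceptance E x $ k $ m * w $ m) = (\<Sum>m\<in>UNIV - {k}. if (k,m) \<in> E then - (w$m / x k m) else 0)"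
    by (rule sum.cong) (auto simp: susceptance_def)
  also have "\<dots> = (\<Sum>m\<in>{j. (k,j) \<in> E}. - (w$m / x k m))"
    using irr by (simp add: sum.If_cases) (rule sum.cong, auto)
  finally show ?thesis
    by (simp add: susceptance_def sum_subtractf diff_divide_distrib sum_distrib_right sum_negf)
qed

lemma col_sum:
  fixes E :: "('n::finite \<times> 'n) set"
  assumes net: "valid_network E x"
  shows "(\<Sum>k\<in>UNIV. (susceptance E x *v w) $ k) = 0"
proof -
  define F where "F p = (w $ fst p - w $ snd p) / x (fst p) (snd p)" for p
  have symE: "sym E" and xs: "\<And>k m. x k m = x m k" using net unfolding valid_network_def by auto
  have "(\<Sum>k\<in>UNIV. (susceptance E x *v w) $ k) = (\<Sum>k\<in>UNIV. \<Sum>j\<in>{j. (k,j) \<in> E}. F (k,j))"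
    by (simp add: row_formula[OF net] F_def)
  also have "\<dots> = (\<Sum>p\<in>Sigma UNIV (\<lambda>k. {j. (k,j) \<in> E}). F p)"
    by (subst sum.Sigma) auto
  also have "Sigma UNIV (\<lambda>k. {j. (k,j) \<in> E}) = E" by auto
  finally have 1: "(\<Sum>k\<in>UNIV. (susceptance E x *v w) $ k) = sum F E" .
  have "sum F E = sum (F \<circ> prod.swap) E"
    unfolding comp_def
  proof (rule sum.reindex_bij_betw[symmetric])
    show "bij_betw prod.swap E E"
      using symE unfolding bij_betw_def sym_def image_def
      by (auto intro!: inj_onI) (metis swap_simp)
  qed
  also have "\<dots> = - sum F E"
    by (simp add: F_def sum_negf[symmetric] xs minus_divide_left)
  finally have "sum F E = 0" by simp
  with 1 show ?thesis by simp
qed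

lemma kernel_const:
  fixes E :: "('n::finite \<times> 'n) set"
  assumes net: "valid_network E x" and conn: "connected_network E"
    and w: "susceptance E x *v w = 0"
  shows "w $ k = w $ m"
proof -
  obtain k0 where k0: "\<And>j. w $ j \<le> w $ k0"
  proof -
    have "\<exists>k0. \<forall>j. w $ j \<le> w $ k0"
    proof -
      have "Max (range (\<lambda>j. w $ j)) \<in> range (\<lambda>j. w $ j)" by (rule Max_in) auto
      then obtain k0 where "w $ k0 = Max (range (\<lambda>j. w $ j))" by (metis rangeE)
      moreover have "w $ j \<le> Max (range (\<lambda>j. w $ j))" for j by (rule Max_ge) auto
      ultimately show ?thesis by metis
    qed
    then show ?thesis using that by blast
  qed
  have pos: "\<And>k m. (k,m) \<in> E \<Longrightarrow> x k m > 0" using net unfolding valid_network_def by auto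
  have all: "w $ j = w $ k0" if "(k0, j) \<in> E\<^sup>*" for j
    using that
  proof (induction rule: rtrancl_induct)
    case base then show ?case by simp
  next
    case (step y z)
    have "0 = (susceptance E x *v w) $ y" using w by simp
    also have "\<dots> = (\<Sum>j\<in>{j. (y,j) \<in> E}. (w$y - w$j) / x y j)" by (rule row_formula[OF net])
    finally have s0: "(\<Sum>j\<in>{j. (y,j) \<in> E}. (w$y - w$j) / x y j) = 0" by simp
    have nn: "\<And>j. j\<in>{j. (y,j) \<in> E} \<Longrightarrow> 0 \<le> (w$y - w$j) / x y j"
      using step.IH k0 pos by (auto intro!: divide_nonneg_pos)
    have "(w$y - w$z) / x y z = 0"
      using sum_nonneg_eq_0_iff[of "{j. (y,j) \<in> E}" "\<lambda>j. (w$y - w$j) / x y j", OF finite nn] s0 step.hyps(2) by blast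
    then show ?case using pos[OF step.hyps(2)] step.IH by simp
  qed
  show ?thesis using all conn unfolding connected_network_def by metis
qed

lemma kernel_zero:
  fixes E :: "('n::finite \<times> 'n) set"
  assumes net: "valid_network E x" and conn: "connected_network E"
    and w: "susceptance E x *v w = 0" and wt: "w $ t = 0"
  shows "w = 0"
  using kernel_const[OF net conn w, of _ t] wt by (simp add: vec_eq_iff)

lemma uvec_sum: "s \<noteq> t \<Longrightarrow> (\<Sum>k\<in>UNIV. uvec s t $ k) = 0"
proof -
  assume st: "s \<noteq> t"
  have "uvec s t $ k = (if k = s then 1 else 0) - (if k = t then 1 else 0)" for k
    using st by (simp add: uvec_def)
  then show ?thesis by (simp add: sum_subtractf)
qed

lemma vvec_prop:
  fixes E :: "('n::finite \<times> 'n) set"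
  assumes net: "valid_network E x" and conn: "connected_network E" and st: "s \<noteq> t"
  shows "susceptance E x *v vvec (susceptance E x) s t = uvec s t \<and> vvec (susceptance E x) s t $ t = 0"
proof -
  define B where "B = susceptance E x"
  define f :: "real^'n \<Rightarrow> real^'n" where "f w = (\<chi> k. if k = t then w $ t else (B *v w) $ k)" for w
  have lin: "linear f"
    by (rule linearI) (auto simp: f_def vec_eq_iff matrix_vector_right_distrib matrix_vector_mult_scaleR)
  have f0: "w = 0" if "f w = 0" for w
  proof -
    have wt: "w $ t = 0" using that by (auto simp: f_def vec_eq_iff dest: spec[of _ t])
    have off: "(B *v w) $ k = 0" if "k \<noteq> t" for k
      using \<open>f w = 0\<close> that by (auto simp: f_def vec_eq_iff dest: spec[of _ k])
    have "(\<Sum>k\<in>UNIV. (B *v w) $ k) = 0" unfolding B_def by (rule col_sum[OF net])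
    moreover have "(\<Sum>k\<in>UNIV. (B *v w) $ k) = (B *v w) $ t + (\<Sum>k\<in>UNIV - {t}. (B *v w) $ k)"
      by (simp add: sum.remove)
    moreover have "(\<Sum>k\<in>UNIV - {t}. (B *v w) $ k) = 0" using off by simp
    ultimately have "(B *v w) $ t = 0" by simp
    then have "B *v w = 0" using off unfolding vec_eq_iff by (metis zero_index)
    then show ?thesis using kernel_zero[OF net conn _ wt] unfolding B_def by simp
  qed
  have "inj f"
  proof (rule injI)
    fix a b assume "f a = f b"
    then have "f (a - b) = 0" using linear_diff[OF lin] by simp
    then have "a - b = 0" by (rule f0)
    then show "a = b" by simp
  qed
  then have "surj f" using linear_inj_imp_surj[OF lin] by simp
  then obtain v where v: "f v = (\<chi> k. if k = t then 0 else uvec s t $ k)" by (metis surjD)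
  have vt: "v $ t = 0" using v by (auto simp: f_def vec_eq_iff dest: spec[of _ t])
  have off: "(B *v v) $ k = uvec s t $ k" if "k \<noteq> t" for k
    using v that by (auto simp: f_def vec_eq_iff dest: spec[of _ k])
  have "(\<Sum>k\<in>UNIV. (B *v v) $ k) = 0" unfolding B_def by (rule col_sum[OF net])
  moreover have "(\<Sum>k\<in>UNIV. (B *v v) $ k) = (B *v v) $ t + (\<Sum>k\<in>UNIV - {t}. (B *v v) $ k)"
    by (simp add: sum.remove)
  moreover have "(\<Sum>k\<in>UNIV. uvec s t $ k) = uvec s t $ t + (\<Sum>k\<in>UNIV - {t}. uvec s t $ k)"
    by (simp add: sum.remove)
  moreover have "(\<Sum>k\<in>UNIV - {t}. (B *v v) $ k) = (\<Sum>k\<in>UNIV - {t}. uvec s t $ k)"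
    using off by simp
  ultimately have "(B *v v) $ t = uvec s t $ t" using uvec_sum[OF st] by simp
  then have Bv: "B *v v = uvec s t" using off unfolding vec_eq_iff by metis
  have ex1: "\<exists>!v. B *v v = uvec s t \<and> v $ t = 0"
  proof (rule ex1I[of _ v])
    show "B *v v = uvec s t \<and> v $ t = 0" using Bv vt by simp
  next
    fix w assume w: "B *v w = uvec s t \<and> w $ t = 0"
    have "B *v (w - v) = 0" using w Bv by (simp add: matrix_vector_mult_diff_distrib)
    then have "w - v = 0" using kernel_zero[OF net conn, of "w - v" t] w vt unfolding B_def by simp
    then show "w = v" by simp
  qed
  show ?thesis unfolding vvec_def B_def[symmetric] by (rule theI'[OF ex1])
qed

lemma repr:
  fixes E :: "('n::finite \<times> 'n) set"
  assumes net: "valid_network E x" and conn: "connected_network E"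
    and a: "th $ t = 0" and b: "tt $ t = 0"
    and eq: "susceptance E x *v tt = susceptance E x *v th + g *\<^sub>R uvec s t"
  shows "tt = th + g *\<^sub>R vvec (susceptance E x) s t"
proof (cases "s = t")
  case True
  have "(\<Sum>k\<in>UNIV. (susceptance E x *v tt) $ k) = (\<Sum>k\<in>UNIV. (susceptance E x *v th) $ k) + g * (\<Sum>k\<in>UNIV. uvec s t $ k)"
    unfolding eq by (simp add: sum.distrib sum_distrib_left)
  moreover have "(\<Sum>k\<in>UNIV. uvec s t $ k) = 1"
  proof -
    have "uvec s t $ k = (if k = t then 1 else 0)" for k using True by (simp add: uvec_def)
    then show ?thesis by simp
  qed
  ultimately have g0: "g = 0" using col_sum[OF net] by simp
  have "susceptance E x *v (tt - th) = 0" using eq g0 by (simp add: matrix_vector_mult_diff_distrib)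
  then have "tt - th = 0" using kernel_zero[OF net conn, of "tt - th" t] a b by simp
  then show ?thesis using g0 by simp
next
  case False
  note vp = vvec_prop[OF net conn False]
  have "susceptance E x *v (tt - th - g *\<^sub>R vvec (susceptance E x) s t) = 0"
    using eq vp by (simp add: matrix_vector_mult_diff_distrib matrix_vector_mult_scaleR)
  then have "tt - th - g *\<^sub>R vvec (susceptance E x) s t = 0"
    using kernel_zero[OF net conn, of "tt - th - g *\<^sub>R vvec (susceptance E x) s t" t] a b vp by simp
  then show ?thesis by (simp add: algebra_simps)
qed

lemma fin_exp:
  fixes S :: "'a \<Rightarrow> 'n::finite" and g :: "'n \<Rightarrow> real"
  assumes P: "prob_space M" and [measurable]: "S \<in> measurable M (count_space UNIV)"
  shows "integrable M (\<lambda>\<omega>. g (S \<omega>)) \<and>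
     integral\<^sup>L M (\<lambda>\<omega>. g (S \<omega>)) = (\<Sum>s\<in>UNIV. g s * measure M {\<omega>\<in>space M. S \<omega> = s})"
proof -
  interpret prob_space M by (rule P)
  have ev: "{\<omega>\<in>space M. S \<omega> = s} \<in> sets M" for s by measurable
  have eq: "g (S \<omega>) = (\<Sum>s\<in>UNIV. g s * indicator {\<omega>\<in>space M. S \<omega> = s} \<omega>)" if "\<omega> \<in> space M" for \<omega>
  proof -
    have "(\<Sum>s\<in>UNIV. g s * indicator {\<omega>\<in>space M. S \<omega> = s} \<omega>) = (\<Sum>s\<in>UNIV. if s = S \<omega> then g s else 0)"
      by (rule sum.cong) (auto simp: indicator_def that)
    then show ?thesis by simp
  qed
  have fin: "emeasure M A < \<top>" for A using emeasure_finite top.not_eq_extremum by blast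
  have int: "integrable M (\<lambda>\<omega>. \<Sum>s\<in>UNIV. g s * indicator {\<omega>\<in>space M. S \<omega> = s} \<omega>)"
    using ev fin by (intro Bochner_Integration.integrable_sum) (auto intro!: integrable_real_indicator)
  have i2: "integral\<^sup>L M (\<lambda>\<omega>. \<Sum>s\<in>UNIV. g s * indicator {\<omega>\<in>space M. S \<omega> = s} \<omega>)
       = (\<Sum>s\<in>UNIV. g s * measure M {\<omega>\<in>space M. S \<omega> = s})"
    using ev fin by (subst Bochner_Integration.integral_sum) (auto intro!: integrable_real_indicator simp: Int_absorb2 sets.sets_into_space)
  show ?thesis
    using int i2 Bochner_Integration.integrable_cong[OF refl eq, of M] Bochner_Integration.integral_cong[OF refl eq, of M] by simp
qed

lemma prod_int:
  fixes p q :: "'a \<Rightarrow> real"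
  assumes [measurable]: "p \<in> borel_measurable M" "q \<in> borel_measurable M"
    and "integrable M (\<lambda>\<omega>. (p \<omega>)^2)" "integrable M (\<lambda>\<omega>. (q \<omega>)^2)"
  shows "integrable M (\<lambda>\<omega>. p \<omega> * q \<omega>)"
proof (rule Bochner_Integration.integrable_bound[where f="\<lambda>\<omega>. (p \<omega>)^2 + (q \<omega>)^2"])
  show "integrable M (\<lambda>\<omega>. (p \<omega>)^2 + (q \<omega>)^2)" using assms by auto
  show "AE \<omega> in M. norm (p \<omega> * q \<omega>) \<le> norm ((p \<omega>)^2 + (q \<omega>)^2)"
  proof (rule AE_I2)
    fix \<omega>
    have h: "2 * \<bar>p \<omega>\<bar> * \<bar>q \<omega>\<bar> \<le> \<bar>p \<omega>\<bar>^2 + \<bar>q \<omega>\<bar>^2" by (rule sum_squares_bound)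
    have h0: "0 \<le> \<bar>p \<omega>\<bar> * \<bar>q \<omega>\<bar>" by simp
    have "\<bar>p \<omega>\<bar> * \<bar>q \<omega>\<bar> \<le> (p \<omega>)^2 + (q \<omega>)^2" using h h0 by (simp only: mult.assoc power2_abs)
    then show "norm (p \<omega> * q \<omega>) \<le> norm ((p \<omega>)^2 + (q \<omega>)^2)"
      by (simp add: abs_mult)
  qed
qed measurable

theorem lemma8:
  fixes E :: "('n::finite \<times> 'n) set" and x :: "'n \<Rightarrow> 'n \<Rightarrow> real"
    and T :: "'n set" and t :: 'n
    and M :: "'a measure"
    and \<theta> \<theta>h :: "'a \<Rightarrow> real^'n" and S :: "'a \<Rightarrow> 'n" and \<Gamma> :: "'a \<Rightarrow> real"
    and \<sigma>\<Gamma>2 :: real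
  assumes net: "valid_network E x" and conn: "connected_network E"
    and T2: "card T \<ge> 2" and tT: "t \<in> T"
    and P: "prob_space M"
    and \<theta>_rv: "\<theta> \<in> borel_measurable M"
    and \<theta>_sq: "\<And>k. integrable M (\<lambda>\<omega>. (\<theta> \<omega> $ k)^2)"
    and \<theta>_t: "\<And>\<omega>. \<omega> \<in> space M \<Longrightarrow> \<theta> \<omega> $ t = 0"
    and S_rv: "S \<in> measurable M (count_space UNIV)"
    and S_unif: "\<And>s. s \<in> T - {t} \<Longrightarrow>
                   measure M {\<omega>\<in>space M. S \<omega> = s} = 1 / real (card T - 1)"
    and \<Gamma>_rv: "\<Gamma> \<in> borel_measurable M"
    and \<Gamma>_sq: "integrable M (\<lambda>\<omega>. (\<Gamma> \<omega>)^2)"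
    and \<Gamma>_mean: "integral\<^sup>L M \<Gamma> = 0"
    and \<Gamma>_var: "integral\<^sup>L M (\<lambda>\<omega>. (\<Gamma> \<omega> - integral\<^sup>L M \<Gamma>)^2) = \<sigma>\<Gamma>2"
    and indep: "indep3 M borel (count_space UNIV) borel \<theta> S \<Gamma>"
    and \<theta>h_t: "\<And>\<omega>. \<omega> \<in> space M \<Longrightarrow> \<theta>h \<omega> $ t = 0"
    and \<theta>h_eq: "\<And>\<omega>. \<omega> \<in> space M \<Longrightarrow>
         susceptance E x *v \<theta>h \<omega> = susceptance E x *v \<theta> \<omega> + \<Gamma> \<omega> *\<^sub>R uvec (S \<omega>) t"
  shows "cov_matrix M \<theta>h = cov_matrix M \<theta>
           + (\<sigma>\<Gamma>2 / real (card T - 1)) *\<^sub>R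
               (\<Sum>s\<in>T - {t}. outer (vvec (susceptance E x) s t) (vvec (susceptance E x) s t))"
proof -
  interpret prob_space M by (rule P)
  define B where "B = susceptance E x"
  define v where "v s = vvec B s t" for s
  define D where "D = T - {t}"
  define c' where "c' = 1 / real (card T - 1)"
  have rep: "\<theta>h \<omega> $ i = \<theta> \<omega> $ i + \<Gamma> \<omega> * v (S \<omega>) $ i" if "\<omega> \<in> space M" for \<omega> i
    using repr[OF net conn \<theta>_t[OF that] \<theta>h_t[OF that] \<theta>h_eq[OF that]] unfolding v_def B_def by simp
  note [measurable] = \<theta>_rv S_rv \<Gamma>_rv
  have nth_m: "(\<lambda>u::real^'n. u $ i) \<in> borel_measurable borel" for i
    by (rule borel_measurable_continuous_onI) (intro continuous_intros)
  have m\<theta>[measurable]: "(\<lambda>\<omega>. \<theta> \<omega> $ i) \<in> borel_measurable M" for i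
    using measurable_compose[OF \<theta>_rv nth_m] by (simp add: comp_def)
  have mg[measurable]: "(\<lambda>\<omega>. g (S \<omega>)) \<in> borel_measurable M" for g :: "'n \<Rightarrow> real" by measurable
  have int\<theta>: "integrable M (\<lambda>\<omega>. \<theta> \<omega> $ i)" for i
    by (rule square_integrable_imp_integrable[OF m\<theta> \<theta>_sq])
  have int\<Gamma>: "integrable M \<Gamma>"
    by (rule square_integrable_imp_integrable[OF \<Gamma>_rv \<Gamma>_sq])
  define m where "m i = integral\<^sup>L M (\<lambda>\<omega>. \<theta> \<omega> $ i)" for i
  note fe = fin_exp[OF P S_rv]
  have mc: "(\<lambda>_::real^'n. 1::real) \<in> borel_measurable borel" by simp
  have mid: "(\<lambda>y::real. y) \<in> borel_measurable borel" by simp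
  have msq: "(\<lambda>y::real. y^2) \<in> borel_measurable borel" by measurable
  have mf: "(\<lambda>u::real^'n. u $ i - m i) \<in> borel_measurable borel" for i
    using nth_m[of i] by measurable
  have i1: "integrable M (\<lambda>\<omega>. (\<lambda>_::real^'n. 1::real) (\<theta> \<omega>))" by simp
  have iG: "integrable M (\<lambda>\<omega>. (\<lambda>y::real. y) (\<Gamma> \<omega>))" using int\<Gamma> by simp
  have iG2: "integrable M (\<lambda>\<omega>. (\<lambda>y::real. y^2) (\<Gamma> \<omega>))" using \<Gamma>_sq by simp
  have ifa: "integrable M (\<lambda>\<omega>. (\<lambda>u::real^'n. u $ i - m i) (\<theta> \<omega>))" for i
    using int\<theta>[of i] by simp
  have ig: "integrable M (\<lambda>\<omega>. g (S \<omega>))" for g :: "'n \<Rightarrow> real" using fe[of g] by blast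
  have I1: "integrable M (\<lambda>\<omega>. 1 * g (S \<omega>) * \<Gamma> \<omega>) \<and> integral\<^sup>L M (\<lambda>\<omega>. 1 * g (S \<omega>) * \<Gamma> \<omega>) = 0" for g :: "'n \<Rightarrow> real"
  proof -
    note X = indep_prod[OF P \<theta>_rv S_rv \<Gamma>_rv indep mc mid i1 ig[of g] iG]
    have "integral\<^sup>L M (\<lambda>\<omega>. \<Gamma> \<omega>) = 0" using \<Gamma>_mean by (simp add: eta_contract_eq)
    then show ?thesis using X by (simp only: mult_zero_right)
  qed
  have I2: "integrable M (\<lambda>\<omega>. (\<theta> \<omega> $ i - m i) * g (S \<omega>) * \<Gamma> \<omega>) \<and>
      integral\<^sup>L M (\<lambda>\<omega>. (\<theta> \<omega> $ i - m i) * g (S \<omega>) * \<Gamma> \<omega>) = 0" for g :: "'n \<Rightarrow> real" and i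
  proof -
    note X = indep_prod[OF P \<theta>_rv S_rv \<Gamma>_rv indep mf[of i] mid ifa[of i] ig[of g] iG]
    have "integral\<^sup>L M (\<lambda>\<omega>. \<Gamma> \<omega>) = 0" using \<Gamma>_mean by (simp add: eta_contract_eq)
    then show ?thesis using X by (simp only: mult_zero_right)
  qed
  have \<Gamma>2: "integral\<^sup>L M (\<lambda>\<omega>. (\<Gamma> \<omega>)^2) = \<sigma>\<Gamma>2" using \<Gamma>_var \<Gamma>_mean by simp
  have I3: "integrable M (\<lambda>\<omega>. 1 * g (S \<omega>) * (\<Gamma> \<omega>)^2) \<and>
      integral\<^sup>L M (\<lambda>\<omega>. 1 * g (S \<omega>) * (\<Gamma> \<omega>)^2) = integral\<^sup>L M (\<lambda>\<omega>. g (S \<omega>)) * \<sigma>\<Gamma>2" for g :: "'n \<Rightarrow> real"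
  proof -
    note X = indep_prod[OF P \<theta>_rv S_rv \<Gamma>_rv indep mc msq i1 ig[of g] iG2]
    have "integral\<^sup>L M (\<lambda>\<omega>. (1::real)) = 1" by (simp add: prob_space)
    then show ?thesis using X \<Gamma>2 by (simp only: mult_1_left)
  qed
  have PS: "measure M {\<omega>\<in>space M. S \<omega> = s} = (if s \<in> D then c' else 0)" for s
  proof -
    have sum1: "(\<Sum>s\<in>UNIV. measure M {\<omega>\<in>space M. S \<omega> = s}) = 1"
      using fe[of "\<lambda>_. 1"] by (simp add: prob_space)
    have finT: "finite T" by simp
    have cD: "card D = card T - 1" unfolding D_def using tT finT by (simp add: card_Diff_singleton)
    have "(\<Sum>s\<in>D. measure M {\<omega>\<in>space M. S \<omega> = s}) = (\<Sum>s\<in>D. c')"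
      using S_unif unfolding D_def c'_def by simp
    also have "\<dots> = 1" using cD T2 unfolding c'_def by simp
    finally have sD: "(\<Sum>s\<in>D. measure M {\<omega>\<in>space M. S \<omega> = s}) = 1" .
    have "(\<Sum>s\<in>UNIV. measure M {\<omega>\<in>space M. S \<omega> = s}) = (\<Sum>s\<in>D. measure M {\<omega>\<in>space M. S \<omega> = s})
        + (\<Sum>s\<in>UNIV - D. measure M {\<omega>\<in>space M. S \<omega> = s})"
      by (metis (no_types, lifting) add.commute finite subset_UNIV sum.subset_diff)
    then have s0: "(\<Sum>s\<in>UNIV - D. measure M {\<omega>\<in>space M. S \<omega> = s}) = 0" using sum1 sD by simp
    have "\<forall>s\<in>UNIV - D. measure M {\<omega>\<in>space M. S \<omega> = s} = 0"
      using sum_nonneg_eq_0_iff[of "UNIV - D" "\<lambda>s. measure M {\<omega>\<in>space M. S \<omega> = s}"] s0 by simp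
    then show ?thesis using S_unif unfolding D_def c'_def by auto
  qed
  have EG: "integral\<^sup>L M (\<lambda>\<omega>. g (S \<omega>)) = c' * (\<Sum>s\<in>D. g s)" for g
  proof -
    have "integral\<^sup>L M (\<lambda>\<omega>. g (S \<omega>)) = (\<Sum>s\<in>UNIV. g s * (if s \<in> D then c' else 0))"
      using fe[of g] PS by simp
    also have "\<dots> = (\<Sum>s\<in>D. g s * c')"
      by (simp add: sum.If_cases[of UNIV "\<lambda>s. s \<in> D"] if_distrib Int_absorb1 cong: if_cong)
    finally show ?thesis by (simp add: sum_distrib_left mult.commute)
  qed
  have Eh: "integral\<^sup>L M (\<lambda>\<omega>. \<theta>h \<omega> $ i) = m i" for i
  proof -
    have "integral\<^sup>L M (\<lambda>\<omega>. \<theta>h \<omega> $ i) = integral\<^sup>L M (\<lambda>\<omega>. \<theta> \<omega> $ i + 1 * v (S \<omega>) $ i * \<Gamma> \<omega>)"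
      by (rule Bochner_Integration.integral_cong) (auto simp: rep)
    also have "\<dots> = m i"
      using I1[of "\<lambda>s. v s $ i"] int\<theta>[of i] unfolding m_def by simp
    finally show ?thesis .
  qed
  have aa: "integrable M (\<lambda>\<omega>. (\<theta> \<omega> $ i - m i) * (\<theta> \<omega> $ j - m j))" for i j
  proof -
    have e: "(\<lambda>\<omega>. (\<theta> \<omega> $ i - m i) * (\<theta> \<omega> $ j - m j)) =
      (\<lambda>\<omega>. \<theta> \<omega> $ i * \<theta> \<omega> $ j - m j * \<theta> \<omega> $ i - m i * \<theta> \<omega> $ j + m i * m j)"
      by (auto simp: algebra_simps)
    have "integrable M (\<lambda>\<omega>. \<theta> \<omega> $ i * \<theta> \<omega> $ j)"
      by (rule prod_int[OF m\<theta> m\<theta> \<theta>_sq \<theta>_sq])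
    then show ?thesis unfolding e using int\<theta> by auto
  qed
  have comp: "cov_matrix M \<theta>h $ i $ j = cov_matrix M \<theta> $ i $ j + c' * \<sigma>\<Gamma>2 * (\<Sum>s\<in>D. v s $ i * v s $ j)" for i j
  proof -
    have "cov_matrix M \<theta>h $ i $ j = integral\<^sup>L M (\<lambda>\<omega>.
        (\<theta> \<omega> $ i - m i) * (\<theta> \<omega> $ j - m j)
        + (\<theta> \<omega> $ i - m i) * v (S \<omega>) $ j * \<Gamma> \<omega>
        + (\<theta> \<omega> $ j - m j) * v (S \<omega>) $ i * \<Gamma> \<omega>
        + 1 * (v (S \<omega>) $ i * v (S \<omega>) $ j) * (\<Gamma> \<omega>)^2)"
      unfolding cov_matrix_def Eh
      by (simp, rule Bochner_Integration.integral_cong) (auto simp: rep algebra_simps power2_eq_square)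
    also have "\<dots> = cov_matrix M \<theta> $ i $ j + 0 + 0 + c' * (\<Sum>s\<in>D. v s $ i * v s $ j) * \<sigma>\<Gamma>2"
      using aa[of i j] I2[of i "\<lambda>s. v s $ j"] I2[of j "\<lambda>s. v s $ i"] I3[of "\<lambda>s. v s $ i * v s $ j"]
        EG[of "\<lambda>s. v s $ i * v s $ j"]
      unfolding cov_matrix_def m_def by simp
    finally show ?thesis by simp
  qed
  show ?thesis
    unfolding vec_eq_iff
    using comp by (simp add: outer_def v_def B_def D_def c'_def sum_distrib_left)
qed

end
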